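(* For each $m \ge 2$ let $(r_m,p_m,s_m)$ be the probabilities of playing $R,P,S$ in a symmetric Nash equilibrium of the imbalanced $(m,3)$-RPS. Then as $m\to\infty$, $\max(r_m,p_m,s_m) \to 1$ (and the other two probabilities tend to $0$); that is, the symmetric Nash equilibrium probability vectors converge, up to permutation of coordinates, to a point mass, which majorizes every probability vector on three objects.
   Context: An $(m,n)$-RPS game is a symmetric, zero-sum, win/lose game with $m$ players and $n$ pure strategies ("objects"), played without collusion. The rules assign to every multiset $c$ of $m$ chosen objects a single winning object $\phi(c)\in c$; every player who chose $\phi(c)$ wins and every other player loses. If there are $m'$ winners, each winner receives payoff $\frac{m-m'}{m'}$ and each loser receives payoff $-1$. A symmetric Nash equilibrium is a mixed-strategy Nash equilibrium in which all players use the same probability distribution over objects. The imbalanced $(m,3)$-RPS has objects $R,P,S$ with the following rules: any multiset containing at least one $S$ and at least one $R$ is won by $R$; any multiset containing only $R$'s and $P$'s (with at least one of each) is won by $P$; any multiset containing only $P$'s and $S$'s (with at least one of each) is won by $S$; a multiset consisting of a single object type is won by that object. *)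

theory Defs
  imports "HOL-Library.Multiset" "HOL-Library.FuncSet" Complex_Main
begin

datatype obj = Rock | Paper | Scissors

definition objs :: "obj set" where
  "objs = {Rock, Paper, Scissors}"

definition winner :: "obj multiset \<Rightarrow> obj" where
  "winner c =
     (if Scissors \<in># c \<and> Rock \<in># c then Rock
      else if Rock \<in># c \<and> Paper \<in># c then Paper
      else if Paper \<in># c \<and> Scissors \<in># c then Scissors
      else if Rock \<in># c then Rock
      else if Paper \<in># c then Paper
      else Scissors)"

definition payoff :: "nat \<Rightarrow> obj multiset \<Rightarrow> obj \<Rightarrow> real" where
  "payoff m c a =
     (if winner c = a then (real m - real (count c a)) / real (count c a) else -1)"

definition is_mixed :: "(obj \<Rightarrow> real) \<Rightarrow> bool" where
  "is_mixed x \<longleftrightarrow> (\<forall>b\<in>objs. 0 \<le> x b) \<and> (\<Sum>b\<in>objs. x b) = 1"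

definition exp_payoff :: "nat \<Rightarrow> (obj \<Rightarrow> real) \<Rightarrow> obj \<Rightarrow> real" where
  "exp_payoff m x a =
     (\<Sum>f\<in>PiE {..<m-1} (\<lambda>_. objs).
        (\<Prod>i<m-1. x (f i)) * payoff m (add_mset a (image_mset f (mset_set {..<m-1}))) a)"

definition sym_NE :: "nat \<Rightarrow> (obj \<Rightarrow> real) \<Rightarrow> bool" where
  "sym_NE m x \<longleftrightarrow> is_mixed x \<and>
     (\<forall>y. is_mixed y \<longrightarrow>
        (\<Sum>a\<in>objs. y a * exp_payoff m x a) \<le> (\<Sum>a\<in>objs. x a * exp_payoff m x a))"

end

theory Submission imports Defs begin

definition W :: "(obj \<Rightarrow> real) \<Rightarrow> nat \<Rightarrow> (obj multiset \<Rightarrow> real) \<Rightarrow> real" where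
 "W x n g = (\<Sum>f\<in>PiE {..<n} (\<lambda>_. objs). (\<Prod>i<n. x (f i)) * g (image_mset f (mset_set {..<n})))"

lemma W_Suc: "W x (Suc n) g = (\<Sum>b\<in>objs. x b * W x n (\<lambda>M. g (add_mset b M)))"
proof -
  let ?T = "\<lambda>_::nat. objs"
  let ?F = "\<lambda>f. (\<Prod>i<Suc n. x (f i)) * g (image_mset f (mset_set {..<Suc n}))"
  have "W x (Suc n) g = sum ?F (PiE (insert n {..<n}) ?T)"
    unfolding W_def lessThan_Suc by simp
  also have "\<dots> = sum ?F ((\<lambda>(y, h). h(n := y)) ` (?T n \<times> PiE {..<n} ?T))"
    by (simp only: PiE_insert_eq)
  also have "\<dots> = sum (?F \<circ> (\<lambda>(y, h). h(n := y))) (objs \<times> PiE {..<n} ?T)"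
    by (rule sum.reindex) (rule inj_combinator, simp)
  also have "\<dots> = (\<Sum>y\<in>objs. \<Sum>h\<in>PiE {..<n} ?T. ?F (h(n:=y)))"
    by (simp only: sum.cartesian_product comp_def case_prod_unfold fst_conv snd_conv)
  also have "\<dots> = (\<Sum>y\<in>objs. \<Sum>h\<in>PiE {..<n} ?T. x y * ((\<Prod>i<n. x (h i)) * g (add_mset y (image_mset h (mset_set {..<n})))))"
  proof (intro sum.cong refl)
    fix y h assume "h \<in> PiE {..<n} ?T"
    have p: "(\<Prod>i<n. x ((h(n:=y)) i)) = (\<Prod>i<n. x (h i))"
      by (intro prod.cong) auto
    have ms: "mset_set {..<Suc n} = add_mset n (mset_set {..<n})"
      by (simp add: lessThan_Suc)
    have im: "image_mset (h(n:=y)) (mset_set {..<n}) = image_mset h (mset_set {..<n})"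
      by (intro image_mset_cong) auto
    show "?F (h(n:=y)) = x y * ((\<Prod>i<n. x (h i)) * g (add_mset y (image_mset h (mset_set {..<n}))))"
      using p im by (simp add: ms)
  qed
  also have "\<dots> = (\<Sum>b\<in>objs. x b * W x n (\<lambda>M. g (add_mset b M)))"
    unfolding W_def by (simp add: sum_distrib_left)
  finally show ?thesis .
qed

lemma bin_step:
  fixes q u :: real
  shows "(\<Sum>k\<le>Suc n. real (Suc n choose k) * q^k * u^(Suc n - k) * \<phi> k) =
    q * (\<Sum>k\<le>n. real (n choose k) * q^k * u^(n-k) * \<phi> (Suc k)) +
    u * (\<Sum>k\<le>n. real (n choose k) * q^k * u^(n-k) * \<phi> k)"
proof -
  have L: "(\<Sum>k\<le>Suc n. real (Suc n choose k) * q^k * u^(Suc n - k) * \<phi> k) =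
     u^(Suc n) * \<phi> 0 + (\<Sum>k\<le>n. real (n choose k) * q^(Suc k) * u^(n-k) * \<phi> (Suc k))
       + (\<Sum>k\<le>n. real (n choose Suc k) * q^(Suc k) * u^(n-k) * \<phi> (Suc k))"
    by (simp only: sum.atMost_Suc_shift) (simp add: sum.distrib algebra_simps)
  have R1: "q * (\<Sum>k\<le>n. real (n choose k) * q^k * u^(n-k) * \<phi> (Suc k)) =
     (\<Sum>k\<le>n. real (n choose k) * q^(Suc k) * u^(n-k) * \<phi> (Suc k))"
    by (simp add: sum_distrib_left algebra_simps)
  have "u * (\<Sum>k\<le>n. real (n choose k) * q^k * u^(n-k) * \<phi> k) =
     (\<Sum>k\<le>n. real (n choose k) * q^k * u^(Suc n-k) * \<phi> k)"
    by (simp add: sum_distrib_left algebra_simps Suc_diff_le)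
  also have "\<dots> = (\<Sum>k\<le>Suc n. real (n choose k) * q^k * u^(Suc n-k) * \<phi> k)"
    by simp
  also have "\<dots> = u^(Suc n) * \<phi> 0 + (\<Sum>k\<le>n. real (n choose Suc k) * q^(Suc k) * u^(n-k) * \<phi> (Suc k))"
    by (simp only: sum.atMost_Suc_shift) simp
  finally show ?thesis using L R1 by simp
qed

lemma W_bin:
  assumes "a \<in> A" "A \<subseteq> objs"
  shows "W x n (\<lambda>M. if set_mset M \<subseteq> A then \<phi> (count M a) else 0) =
    (\<Sum>k\<le>n. real (n choose k) * x a ^ k * (\<Sum>b\<in>A-{a}. x b) ^ (n-k) * \<phi> k)"
proof (induction n arbitrary: \<phi>)
  case 0
  then show ?case by (simp add: W_def)
next
  case (Suc n)
  let ?u = "\<Sum>b\<in>A-{a}. x b"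
  have fin: "finite objs" by (simp add: objs_def)
  have fA: "finite A" using assms(2) fin finite_subset by blast
  have pt: "x b * W x n (\<lambda>M. if set_mset (add_mset b M) \<subseteq> A then \<phi> (count (add_mset b M) a) else 0)
     = (if b = a then x a * W x n (\<lambda>M. if set_mset M \<subseteq> A then \<phi> (Suc (count M a)) else 0)
        else if b \<in> A then x b * W x n (\<lambda>M. if set_mset M \<subseteq> A then \<phi> (count M a) else 0) else 0)" for b
  proof -
    have e1: "(\<lambda>M. if set_mset (add_mset a M) \<subseteq> A then \<phi> (count (add_mset a M) a) else 0)
      = (\<lambda>M. if set_mset M \<subseteq> A then \<phi> (Suc (count M a)) else 0)"
      using assms(1) by (intro ext) simp
    have e2: "b \<noteq> a \<Longrightarrow> b \<in> A \<Longrightarrow> (\<lambda>M. if set_mset (add_mset b M) \<subseteq> A then \<phi> (count (add_mset b M) a) else 0)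
      = (\<lambda>M. if set_mset M \<subseteq> A then \<phi> (count M a) else 0)"
      by (intro ext) simp
    have e3: "b \<notin> A \<Longrightarrow> (\<lambda>M. if set_mset (add_mset b M) \<subseteq> A then \<phi> (count (add_mset b M) a) else 0)
      = (\<lambda>M. 0)"
      by (intro ext) simp
    have e4: "W x n (\<lambda>M. 0) = 0" by (simp add: W_def)
    show ?thesis using e1 e2 e3 e4 assms(1) by auto
  qed
  have "W x (Suc n) (\<lambda>M. if set_mset M \<subseteq> A then \<phi> (count M a) else 0) =
     (\<Sum>b\<in>objs. (if b = a then x a * W x n (\<lambda>M. if set_mset M \<subseteq> A then \<phi> (Suc (count M a)) else 0)
        else if b \<in> A then x b * W x n (\<lambda>M. if set_mset M \<subseteq> A then \<phi> (count M a) else 0) else 0))"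
    by (simp only: W_Suc pt)
  also have "\<dots> = (\<Sum>b\<in>A. (if b = a then x a * W x n (\<lambda>M. if set_mset M \<subseteq> A then \<phi> (Suc (count M a)) else 0)
        else if b \<in> A then x b * W x n (\<lambda>M. if set_mset M \<subseteq> A then \<phi> (count M a) else 0) else 0))"
    using assms by (intro sum.mono_neutral_right fin) auto
  also have "\<dots> = x a * W x n (\<lambda>M. if set_mset M \<subseteq> A then \<phi> (Suc (count M a)) else 0)
      + ?u * W x n (\<lambda>M. if set_mset M \<subseteq> A then \<phi> (count M a) else 0)"
    using assms fA by (simp add: sum.remove[of A a] sum_distrib_right)
  also have "\<dots> = (\<Sum>k\<le>Suc n. real (Suc n choose k) * x a ^ k * ?u ^ (Suc n-k) * \<phi> k)"
    using Suc.IH[of "\<lambda>k. \<phi> (Suc k)"] Suc.IH[of \<phi>] bin_step[of n "x a" ?u \<phi>] by simp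
  finally show ?case .
qed

lemma W_inv:
  assumes "a \<in> A" "A \<subseteq> objs"
  shows "x a * real (Suc n) * W x n (\<lambda>M. if set_mset M \<subseteq> A then 1 / (1 + real (count M a)) else 0)
    = ((\<Sum>b\<in>A-{a}. x b) + x a) ^ Suc n - (\<Sum>b\<in>A-{a}. x b) ^ Suc n"
proof -
  let ?u = "\<Sum>b\<in>A-{a}. x b"
  let ?q = "x a"
  have "x a * real (Suc n) * W x n (\<lambda>M. if set_mset M \<subseteq> A then 1 / (1 + real (count M a)) else 0)
     = ?q * real (Suc n) * (\<Sum>k\<le>n. real (n choose k) * ?q ^ k * ?u ^ (n-k) * (1 / (1 + real k)))"
    using W_bin[OF assms, of x n "\<lambda>k. 1 / (1 + real k)"] by simp
  also have "\<dots> = (\<Sum>k\<le>n. real (Suc n choose Suc k) * ?q ^ Suc k * ?u ^ (n-k))"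
    unfolding sum_distrib_left
  proof (intro sum.cong refl)
    fix k
    have e: "real (Suc n) * real (n choose k) = real (Suc n choose Suc k) * (1 + real k)"
      using Suc_times_binomial_eq[of n k] by (metis of_nat_Suc of_nat_mult add.commute)
    have "?q * real (Suc n) * (real (n choose k) * ?q ^ k * ?u ^ (n-k) * (1 / (1 + real k)))
      = (real (Suc n) * real (n choose k)) * (?q ^ Suc k * ?u ^ (n-k)) / (1 + real k)"
      by (simp add: mult_ac)
    also have "\<dots> = real (Suc n choose Suc k) * (?q ^ Suc k * ?u ^ (n-k))"
      unfolding e by (simp add: add_pos_nonneg)
    finally show "?q * real (Suc n) * (real (n choose k) * ?q ^ k * ?u ^ (n-k) * (1 / (1 + real k))) =
       real (Suc n choose Suc k) * ?q ^ Suc k * ?u ^ (n-k)" by (simp add: mult_ac)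
  qed
  also have "\<dots> = (?u + ?q) ^ Suc n - ?u ^ Suc n"
  proof -
    have "(?q + ?u) ^ Suc n = (\<Sum>k\<le>Suc n. real (Suc n choose k) * ?q ^ k * ?u ^ (Suc n - k))"
      by (rule binomial_ring)
    also have "\<dots> = real (Suc n choose 0) * ?q ^ 0 * ?u ^ (Suc n - 0) +
       (\<Sum>k\<le>n. real (Suc n choose Suc k) * ?q ^ Suc k * ?u ^ (Suc n - Suc k))"
      by (rule sum.atMost_Suc_shift)
    also have "\<dots> = ?u ^ Suc n + (\<Sum>k\<le>n. real (Suc n choose Suc k) * ?q ^ Suc k * ?u ^ (n - k))"
      by simp
    finally show ?thesis by (simp add: add.commute)
  qed
  finally show ?thesis .
qed


lemma W_add: "W x n (\<lambda>M. g M + h M) = W x n g + W x n h"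
  by (simp add: W_def sum.distrib algebra_simps)
lemma W_diff: "W x n (\<lambda>M. g M - h M) = W x n g - W x n h"
  by (simp add: W_def sum_subtractf algebra_simps)
lemma W_cmult: "W x n (\<lambda>M. c * g M) = c * W x n g"
  by (simp add: W_def sum_distrib_left algebra_simps)

lemma W_one: assumes "is_mixed x" shows "W x n (\<lambda>M. 1) = 1"
proof (induction n)
  case 0 then show ?case by (simp add: W_def)
next
  case (Suc n)
  have "(\<Sum>b\<in>objs. x b) = 1" using assms by (simp add: is_mixed_def)
  then show ?case by (simp add: W_Suc Suc)
qed

lemma W_cong: assumes "\<And>M. size M = n \<Longrightarrow> g M = h M" shows "W x n g = W x n h"
  unfolding W_def by (intro sum.cong refl) (simp add: assms)

lemma exp_W: "exp_payoff (Suc n) x a = W x n (\<lambda>M. payoff (Suc n) (add_mset a M) a)"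
  by (simp add: exp_payoff_def W_def)

lemma arith1: "(real m - real (Suc k)) / real (Suc k) = real m * (1 / (1 + real k)) - 1"
proof -
  have "real (Suc k) > 0" by simp
  then show ?thesis by (simp add: field_simps)
qed

lemma arith2: "(real n - real k) / (1 + real k) = (1 + real n) / (1 + real k) - 1"
proof -
  have "1 + real k > 0" by simp
  then show ?thesis by (simp add: field_simps)
qed

lemma payoff_P: "payoff (Suc n) (add_mset Paper M) Paper =
   real (Suc n) * (if set_mset M \<subseteq> {Rock, Paper} then 1 / (1 + real (count M Paper)) else 0) - 1"
proof -
  have "set_mset M \<subseteq> {Rock, Paper} \<longleftrightarrow> Scissors \<notin># M"
    by (auto, metis obj.exhaust insertCI subsetI)
  then show ?thesis
    by (auto simp: payoff_def winner_def arith1 arith2)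
qed

lemma payoff_S: "payoff (Suc n) (add_mset Scissors M) Scissors =
   real (Suc n) * (if set_mset M \<subseteq> {Paper, Scissors} then 1 / (1 + real (count M Scissors)) else 0) - 1"
proof -
  have "set_mset M \<subseteq> {Paper, Scissors} \<longleftrightarrow> Rock \<notin># M"
    by (auto, metis obj.exhaust insertCI subsetI)
  then show ?thesis
    by (auto simp: payoff_def winner_def arith1 arith2)
qed

lemma payoff_R: assumes "size M = n"
  shows "payoff (Suc n) (add_mset Rock M) Rock =
   real (Suc n) * ((if set_mset M \<subseteq> objs then 1 / (1 + real (count M Rock)) else 0)
     - (if set_mset M \<subseteq> {Rock, Paper} then 1 / (1 + real (count M Rock)) else 0)
     + (if set_mset M \<subseteq> {Rock} then 1 / (1 + real (count M Rock)) else 0)) - 1"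
proof -
  have o: "set_mset M \<subseteq> objs" unfolding objs_def by (auto, metis obj.exhaust)
  have rp: "set_mset M \<subseteq> {Rock, Paper} \<longleftrightarrow> Scissors \<notin># M"
    by (auto, metis obj.exhaust insertCI subsetI)
  have r: "set_mset M \<subseteq> {Rock} \<longleftrightarrow> Scissors \<notin># M \<and> Paper \<notin># M"
    by (auto, metis obj.exhaust insertCI subsetI)
  show ?thesis
  proof (cases "set_mset M \<subseteq> {Rock}")
    case True
    have "M = replicate_mset (count M Rock) Rock"
      by (rule multiset_eqI) (use True in \<open>auto simp: count_eq_zero_iff\<close>)
    then have "count M Rock = n" using assms by (metis size_replicate_mset)
    then show ?thesis using True o rp r by (auto simp: payoff_def winner_def arith1 arith2)
  next
    case False
    then show ?thesis using o rp r by (auto simp: payoff_def winner_def arith1 arith2)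
  qed
qed


lemma lin1: fixes E m w q T :: real
  assumes a: "E = m * w - 1" and b: "q * m * w = T" shows "q * E = T - q"
proof -
  have "q * E = q * m * w - q" unfolding a by (simp add: algebra_simps)
  then show ?thesis using b by simp
qed

lemma lin3: fixes E m w1 w2 w3 q T1 T2 T3 :: real
  assumes a: "E = m * (w1 - w2 + w3) - 1" and b: "q * m * w1 = T1" "q * m * w2 = T2" "q * m * w3 = T3"
  shows "q * E = T1 - T2 + T3 - q"
proof -
  have "q * E = q * m * w1 - q * m * w2 + q * m * w3 - q" unfolding a by (simp add: algebra_simps)
  then show ?thesis using b by simp
qed

lemma EP: assumes "is_mixed x"
  shows "x Paper * exp_payoff (Suc n) x Paper = (x Rock + x Paper) ^ Suc n - x Rock ^ Suc n - x Paper"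
proof -
  have "exp_payoff (Suc n) x Paper = real (Suc n) *
     W x n (\<lambda>M. if set_mset M \<subseteq> {Rock, Paper} then 1 / (1 + real (count M Paper)) else 0) - 1"
    by (simp only: exp_W payoff_P W_diff W_cmult W_one[OF assms])
  moreover have "x Paper * real (Suc n) *
     W x n (\<lambda>M. if set_mset M \<subseteq> {Rock, Paper} then 1 / (1 + real (count M Paper)) else 0)
     = (x Rock + x Paper) ^ Suc n - x Rock ^ Suc n"
  proof -
    have "{Rock, Paper} - {Paper} = {Rock}" by auto
    then show ?thesis using W_inv[of Paper "{Rock, Paper}" x n] by (simp add: objs_def)
  qed
  ultimately show ?thesis by (rule lin1)
qed

lemma ES: assumes "is_mixed x"
  shows "x Scissors * exp_payoff (Suc n) x Scissors = (x Paper + x Scissors) ^ Suc n - x Paper ^ Suc n - x Scissors"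
proof -
  have "exp_payoff (Suc n) x Scissors = real (Suc n) *
     W x n (\<lambda>M. if set_mset M \<subseteq> {Paper, Scissors} then 1 / (1 + real (count M Scissors)) else 0) - 1"
    by (simp only: exp_W payoff_S W_diff W_cmult W_one[OF assms])
  moreover have "x Scissors * real (Suc n) *
     W x n (\<lambda>M. if set_mset M \<subseteq> {Paper, Scissors} then 1 / (1 + real (count M Scissors)) else 0)
     = (x Paper + x Scissors) ^ Suc n - x Paper ^ Suc n"
  proof -
    have "{Paper, Scissors} - {Scissors} = {Paper}" by auto
    then show ?thesis using W_inv[of Scissors "{Paper, Scissors}" x n] by (simp add: objs_def)
  qed
  ultimately show ?thesis by (rule lin1)
qed

lemma ER: assumes "is_mixed x"
  shows "x Rock * exp_payoff (Suc n) x Rock =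
    ((x Paper + x Scissors + x Rock) ^ Suc n - (x Paper + x Scissors) ^ Suc n)
    - ((x Paper + x Rock) ^ Suc n - x Paper ^ Suc n) + x Rock ^ Suc n - x Rock"
proof -
  let ?g = "\<lambda>A M. if set_mset M \<subseteq> A then 1 / (1 + real (count M Rock)) else 0"
  have "exp_payoff (Suc n) x Rock = W x n (\<lambda>M. real (Suc n) * (?g objs M - ?g {Rock, Paper} M + ?g {Rock} M) - 1)"
    unfolding exp_W by (rule W_cong) (rule payoff_R)
  also have "\<dots> = real (Suc n) * (W x n (?g objs) - W x n (?g {Rock, Paper}) + W x n (?g {Rock})) - 1"
    by (simp only: W_diff W_cmult W_add W_one[OF assms])
  finally have e: "exp_payoff (Suc n) x Rock = real (Suc n) * (W x n (?g objs) - W x n (?g {Rock, Paper}) + W x n (?g {Rock})) - 1" .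
  have 1: "x Rock * real (Suc n) * W x n (?g objs) = (x Paper + x Scissors + x Rock) ^ Suc n - (x Paper + x Scissors) ^ Suc n"
  proof -
    have "objs - {Rock} = {Paper, Scissors}" by (auto simp: objs_def)
    then show ?thesis using W_inv[of Rock objs x n] by (simp add: objs_def)
  qed
  have 2: "x Rock * real (Suc n) * W x n (?g {Rock, Paper}) = (x Paper + x Rock) ^ Suc n - x Paper ^ Suc n"
    using W_inv[of Rock "{Rock, Paper}" x n] by (simp add: objs_def)
  have 3: "x Rock * real (Suc n) * W x n (?g {Rock}) = x Rock ^ Suc n"
    using W_inv[of Rock "{Rock}" x n] by (simp add: objs_def)
  show ?thesis using lin3[OF e 1 2 3] .
qed

lemma key:
  fixes r p s c :: real and m :: nat
  assumes nn: "r \<ge> 0" "p \<ge> 0" "s \<ge> 0" and sum1: "r + p + s = 1"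
    and FP: "(r + p) ^ m - r ^ m - p = 0" and FS: "(p + s) ^ m - p ^ m - s = 0"
    and c: "0 < c" "c \<le> 1/2" and small: "(real m + 1) * (1 - c) ^ m < c"
  shows "\<not> (r \<ge> c \<and> s \<ge> c) \<and> \<not> (p \<ge> c \<and> s \<ge> c) \<and> \<not> (r \<ge> c \<and> p \<ge> c)"
proof -
  have c1: "0 \<le> 1 - c" using c by simp
  have pw: "0 \<le> (1 - c) ^ m" using c1 by simp
  have "1 * (1 - c) ^ m \<le> (real m + 1) * (1 - c) ^ m" by (rule mult_right_mono) (use pw in auto)
  then have sm1: "(1 - c) ^ m < c" using small by linarith
  have A: "\<not> (r \<ge> c \<and> s \<ge> c)"
  proof
    assume h: "r \<ge> c \<and> s \<ge> c"
    have "s \<le> (p + s) ^ m" using FS zero_le_power[OF nn(2), of m] by linarith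
    also have "\<dots> \<le> (1 - c) ^ m" using h nn sum1 by (intro power_mono) auto
    finally show False using sm1 h by simp
  qed
  have B: "\<not> (p \<ge> c \<and> s \<ge> c)"
  proof
    assume h: "p \<ge> c \<and> s \<ge> c"
    have "p \<le> (r + p) ^ m" using FP zero_le_power[OF nn(1), of m] by linarith
    also have "\<dots> \<le> (1 - c) ^ m" using h nn sum1 by (intro power_mono) auto
    finally show False using sm1 h by simp
  qed
  have C: "\<not> (r \<ge> c \<and> p \<ge> c)"
  proof
    assume h: "r \<ge> c \<and> p \<ge> c"
    have "s \<le> (p + s) ^ m" using FS zero_le_power[OF nn(2), of m] by linarith
    also have "\<dots> \<le> (1 - c) ^ m" using h nn sum1 by (intro power_mono) auto
    finally have s1: "s \<le> (1 - c) ^ m" .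
    have "r ^ m \<le> (1 - c) ^ m" using h nn sum1 by (intro power_mono) auto
    have bern: "1 + real m * (- s) \<le> (1 + (- s)) ^ m"
      using nn sum1 by (intro Bernoulli_inequality) simp
    have "r + p = 1 - s" using sum1 by simp
    then have "p = (1 - s) ^ m - r ^ m" using FP by simp
    then have "p \<ge> 1 - real m * s - r ^ m" using bern by simp
    then have "r \<le> real m * s + r ^ m" using sum1 nn by simp
    also have "\<dots> \<le> real m * (1 - c) ^ m + (1 - c) ^ m"
      using s1 \<open>r ^ m \<le> (1 - c) ^ m\<close> by (intro add_mono mult_left_mono) auto
    also have "\<dots> = (real m + 1) * (1 - c) ^ m" by (simp add: algebra_simps)
    finally show False using small h by simp
  qed
  show ?thesis using A B C by blast
qed

lemma NE_F:
  assumes "sym_NE (Suc n) x"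
  shows "is_mixed x" "(x Rock + x Paper) ^ Suc n - x Rock ^ Suc n - x Paper = 0"
    "(x Paper + x Scissors) ^ Suc n - x Paper ^ Suc n - x Scissors = 0"
proof -
  show mx: "is_mixed x" using assms by (simp add: sym_NE_def)
  let ?E = "exp_payoff (Suc n) x"
  let ?V = "\<Sum>a\<in>objs. x a * ?E a"
  have s1: "x Rock + x Paper + x Scissors = 1" and nn: "x Rock \<ge> 0" "x Paper \<ge> 0" "x Scissors \<ge> 0"
    using mx by (auto simp: is_mixed_def objs_def)
  have V: "?V = x Rock * ?E Rock + x Paper * ?E Paper + x Scissors * ?E Scissors"
    by (simp add: objs_def)
  have "?V = 0" unfolding V ER[OF mx] EP[OF mx] ES[OF mx]
  proof -
    have "x Paper + x Scissors + x Rock = 1" using s1 by simp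
    then show "(x Paper + x Scissors + x Rock) ^ Suc n - (x Paper + x Scissors) ^ Suc n -
      ((x Paper + x Rock) ^ Suc n - x Paper ^ Suc n) + x Rock ^ Suc n - x Rock +
      ((x Rock + x Paper) ^ Suc n - x Rock ^ Suc n - x Paper) +
      ((x Paper + x Scissors) ^ Suc n - x Paper ^ Suc n - x Scissors) = 0"
      using s1 by (simp add: add.commute add.left_commute)
  qed
  have le: "?E a \<le> 0" if "a \<in> objs" for a
  proof -
    have "is_mixed (\<lambda>b. if b = a then 1 else 0)"
      using that by (auto simp: is_mixed_def objs_def)
    then have "(\<Sum>b\<in>objs. (if b = a then 1 else 0) * ?E b) \<le> ?V"
      using assms by (simp add: sym_NE_def)
    moreover have "(\<Sum>b\<in>objs. (if b = a then 1 else 0) * ?E b) = ?E a"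
      using that unfolding objs_def by (cases a) auto
    ultimately show ?thesis using \<open>?V = 0\<close> by simp
  qed
  have "x Rock * ?E Rock \<le> 0" "x Paper * ?E Paper \<le> 0" "x Scissors * ?E Scissors \<le> 0"
    using le nn by (auto simp: objs_def mult_nonneg_nonpos)
  then have "x Paper * ?E Paper = 0" "x Scissors * ?E Scissors = 0"
    using \<open>?V = 0\<close> V by linarith+
  then show "(x Rock + x Paper) ^ Suc n - x Rock ^ Suc n - x Paper = 0"
    "(x Paper + x Scissors) ^ Suc n - x Paper ^ Suc n - x Scissors = 0"
    using EP[OF mx] ES[OF mx] by simp_all
qed

lemma maxb:
  fixes r p s c :: real
  assumes "r \<ge> 0" "p \<ge> 0" "s \<ge> 0" "r + p + s = 1" "c > 0"
   "\<not> (r \<ge> c \<and> s \<ge> c) \<and> \<not> (p \<ge> c \<and> s \<ge> c) \<and> \<not> (r \<ge> c \<and> p \<ge> c)"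
  shows "max r (max p s) > 1 - 3 * c" "max r (max p s) \<le> 1"
proof -
  have "r \<le> max r (max p s)" "p \<le> max r (max p s)" "s \<le> max r (max p s)" by auto
  then show "max r (max p s) > 1 - 3 * c"
    using assms by (cases "r \<ge> c"; cases "p \<ge> c"; cases "s \<ge> c") linarith+
  have "max r (max p s) = r \<or> max r (max p s) = p \<or> max r (max p s) = s" by linarith
  then show "max r (max p s) \<le> 1" using assms by linarith
qed

theorem mainTheorem3:
  fixes x :: "nat \<Rightarrow> obj \<Rightarrow> real"
  assumes "\<And>m. m \<ge> 2 \<Longrightarrow> sym_NE m (x m)"
  shows "(\<lambda>m. max (x m Rock) (max (x m Paper) (x m Scissors))) \<longlonglongrightarrow> 1"
  unfolding tendsto_iff
proof (intro allI impI)
  fix e :: real assume e: "e > 0"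
  define c where "c = min (e / 3) (1 / 2)"
  have c: "0 < c" "c \<le> 1/2" "3 * c \<le> e" using e by (auto simp: c_def)
  have n1: "norm (1 - c) < 1" using c by simp
  have "(\<lambda>m. real m * (1 - c) ^ m + (1 - c) ^ m) \<longlonglongrightarrow> 0 + 0"
    by (intro tendsto_add powser_times_n_limit_0 LIMSEQ_power_zero n1)
  then have ev1: "eventually (\<lambda>m. real m * (1 - c) ^ m + (1 - c) ^ m < c) sequentially"
    using c by (intro order_tendstoD(2)) auto
  show "eventually (\<lambda>m. dist (max (x m Rock) (max (x m Paper) (x m Scissors))) 1 < e) sequentially"
    using ev1 eventually_ge_at_top[of 2]
  proof eventually_elim
    case (elim m)
    then obtain n where mn: "m = Suc n" by (cases m) auto
    have NE: "sym_NE (Suc n) (x m)" using assms elim mn by simp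
    note F = NE_F[OF NE]
    have s1: "x m Rock + x m Paper + x m Scissors = 1" and nn: "x m Rock \<ge> 0" "x m Paper \<ge> 0" "x m Scissors \<ge> 0"
      using F(1) by (auto simp: is_mixed_def objs_def)
    have small: "(real (Suc n) + 1) * (1 - c) ^ Suc n < c"
      using elim mn by (simp add: algebra_simps)
    have K: "\<not> (x m Rock \<ge> c \<and> x m Scissors \<ge> c) \<and> \<not> (x m Paper \<ge> c \<and> x m Scissors \<ge> c) \<and> \<not> (x m Rock \<ge> c \<and> x m Paper \<ge> c)"
      by (rule key[OF nn s1 F(2) F(3) c(1) c(2) small])
    have "max (x m Rock) (max (x m Paper) (x m Scissors)) > 1 - 3 * c"
      "max (x m Rock) (max (x m Paper) (x m Scissors)) \<le> 1"
      using maxb[OF nn s1 c(1) K] by auto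
    then show ?case using c unfolding dist_real_def abs_less_iff by linarith
  qed
qed

end
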